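(* Let $i$ be a non-negative integer with $i\not\equiv 2 \pmod 3$, let $k=2i^2+7i+6$ and $m=2k+1$. Then there exists a cyclic DCA$(4,2m+1;2m)$ satisfying P1 and P2 (so these give an infinite family).
   Context: A difference covering array DCA$(k,\eta;n)$ over $\mathbb{Z}_n$ (a cyclic DCA) is an $\eta\times k$ matrix $Q=[q(i,j)]$ with entries in $\mathbb{Z}_n$ such that for every pair of distinct columns $j,j'$ the multiset $\{q(i,j)-q(i,j') : 0\le i\le \eta-1\}$ contains every element of $\mathbb{Z}_n$ at least once. A DCA$(k,n+1;n)$ is taken in normalized form: all entries of its last row (row $n$) and last column (column $k-1$) equal $0$. It satisfies P1 if $0$ occurs at least twice in every column, and P2 if for all distinct columns $j,j'$ with $j\neq k-1\neq j'$, the set $\{q(i,j)-q(i,j') : 0\le i\le n-1\}$ equals $\mathbb{Z}_n\setminus\{0\}$. (Here the letter $k$ in the claim denotes the integer $2i^2+7i+6$, while the first parameter of the DCA is $4$.) *)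

theory Defs
  imports Main
begin

text \<open>An eta x k matrix over Z_n is modelled as a function Q :: nat => nat => nat
  (row index, column index) whose entries on rows < eta and columns < k lie in {0..<n};
  residues of Z_n are represented by their canonical representatives 0..n-1, and
  the difference q - q' in Z_n is (q + n - q') mod n.\<close>

definition zdiff :: "nat \<Rightarrow> nat \<Rightarrow> nat \<Rightarrow> nat" where
  "zdiff n a b = (a + n - b) mod n"

definition is_DCA :: "nat \<Rightarrow> nat \<Rightarrow> nat \<Rightarrow> (nat \<Rightarrow> nat \<Rightarrow> nat) \<Rightarrow> bool" where
  "is_DCA k eta n Q \<longleftrightarrow>
     (\<forall>i<eta. \<forall>j<k. Q i j < n) \<and>
     (\<forall>j<k. \<forall>j'<k. j \<noteq> j' \<longrightarrow> (\<forall>d<n. \<exists>i<eta. zdiff n (Q i j) (Q i j') = d))"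

definition normalized_DCA :: "nat \<Rightarrow> nat \<Rightarrow> (nat \<Rightarrow> nat \<Rightarrow> nat) \<Rightarrow> bool" where
  "normalized_DCA k n Q \<longleftrightarrow>
     is_DCA k (n + 1) n Q \<and> (\<forall>j<k. Q n j = 0) \<and> (\<forall>i<n + 1. Q i (k - 1) = 0)"

definition DCA_P1 :: "nat \<Rightarrow> nat \<Rightarrow> (nat \<Rightarrow> nat \<Rightarrow> nat) \<Rightarrow> bool" where
  "DCA_P1 k eta Q \<longleftrightarrow> (\<forall>j<k. 2 \<le> card {i. i < eta \<and> Q i j = 0})"

definition DCA_P2 :: "nat \<Rightarrow> nat \<Rightarrow> (nat \<Rightarrow> nat \<Rightarrow> nat) \<Rightarrow> bool" where
  "DCA_P2 k n Q \<longleftrightarrow>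
     (\<forall>j<k. \<forall>j'<k. j \<noteq> j' \<and> j \<noteq> k - 1 \<and> j' \<noteq> k - 1 \<longrightarrow>
        {zdiff n (Q i j) (Q i j') | i. i < n} = {1..<n})"

end

theory Submission
  imports Defs
begin


locale dca =
  fixes x u w :: int
  assumes x1: "x \<ge> 1" and xodd: "odd x" and hu0: "u*(1-x) - 1 = (x^2+x+1)*w"
begin

definition M :: int where "M = x^2+x+1"

lemma hu: "u*(1-x) - 1 = M*w" using hu0 by (simp add: M_def)

lemma xsq: "x^2 \<ge> x"
proof -
  have "x*1 \<le> x*x" using x1 by (intro mult_left_mono) auto
  then show ?thesis by (simp add: power2_eq_square)
qed

lemma M_ge: "M \<ge> 3" unfolding M_def using x1 xsq by linarith

lemma x_lt: "x < M" unfolding M_def using x1 xsq by linarith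

lemma M_odd: "odd M"
proof -
  have "even (x^2 + x)" using xodd by auto
  then show ?thesis unfolding M_def by simp
qed

lemma cg: "(a mod M = b mod M) \<longleftrightarrow> M dvd (a - b)" by (rule mod_eq_dvd_iff)

definition enc :: "int \<Rightarrow> int \<Rightarrow> nat" where
  "enc f s = nat ((s*(M+1) + f*M) mod (2*M))"

definition N :: nat where "N = nat (2*M)"

lemma int_enc: "int (enc f s) = (s*(M+1) + f*M) mod (2*M)"
  unfolding enc_def using M_ge by simp

lemma enc_lt: "enc f s < N"
  unfolding enc_def N_def using M_ge by (simp add: nat_less_eq_zless)

lemma enc_eq:
  assumes "f mod 2 = f' mod 2" "s mod M = s' mod M"
  shows "enc f s = enc f' s'"
proof -
  obtain a where a: "s - s' = M*a" using assms(2) cg by (metis dvdE)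
  obtain b where b: "f - f' = 2*b" using assms(1) by (metis dvdE mod_eq_dvd_iff)
  obtain c where c: "M + 1 = 2*c" using M_odd by (metis dvdE odd_even_add odd_one)
  have "(s*(M+1) + f*M) - (s'*(M+1) + f'*M) = (2*M)*(a*c + b)"
  proof -
    have "(s*(M+1) + f*M) - (s'*(M+1) + f'*M) = (s-s')*(M+1) + (f-f')*M" by (simp add: algebra_simps)
    also have "\<dots> = (M*a)*(2*c) + (2*b)*M" using a b c by simp
    finally show ?thesis by (simp add: algebra_simps)
  qed
  then have "(s*(M+1) + f*M) mod (2*M) = (s'*(M+1) + f'*M) mod (2*M)"
    by (simp add: mod_eq_dvd_iff)
  then show ?thesis unfolding enc_def by simp
qed

lemma enc_zero:
  assumes "enc f s = 0"
  shows "f mod 2 = 0 \<and> s mod M = 0"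
proof -
  have "(s*(M+1) + f*M) mod (2*M) = 0" using assms int_enc[of f s] by simp
  then obtain c where c: "s*(M+1) + f*M = (2*M)*c" by (metis dvdE mod_0_imp_dvd)
  have "s = M*(2*c - s - f)" using c by (simp add: algebra_simps)
  then have s: "M dvd s" by (metis dvdI)
  then obtain a where a: "s = M*a" by (metis dvdE)
  obtain d where d: "M + 1 = 2*d" using M_odd by (metis dvdE odd_even_add odd_one)
  have "f*M = 2*(M*c - a*M*d)" using c a d by algebra
  then have "even (f*M)" by simp
  then have "even f" using M_odd by simp
  then show ?thesis using s by simp
qed

lemma enc_self: "d < N \<Longrightarrow> enc (int d mod 2) (int d) = d"
proof -
  assume d: "d < N"
  have lt: "int d < 2*M" using d M_ge unfolding N_def by simp
  have "int d*(M+1) + (int d mod 2)*M - int d = M*(int d + int d mod 2)" by (simp add: algebra_simps)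
  moreover have "even (int d + int d mod 2)" by (simp add: even_add)
  ultimately obtain c where "int d*(M+1) + (int d mod 2)*M - int d = (2*M)*c"
    by (metis dvdE mult.left_commute mult.commute)
  then have "(int d*(M+1) + (int d mod 2)*M) mod (2*M) = int d mod (2*M)"
    by (simp add: mod_eq_dvd_iff)
  also have "\<dots> = int d" using lt by simp
  finally show ?thesis unfolding enc_def by simp
qed

lemma zdiff_enc: "zdiff N (enc f s) (enc f' s') = enc (f - f') (s - s')"
proof -
  have N: "int N = 2*M" unfolding N_def using M_ge by simp
  have a: "enc f' s' < N" by (rule enc_lt)
  have "int (zdiff N (enc f s) (enc f' s')) = (int (enc f s) + int N - int (enc f' s')) mod int N"
    unfolding zdiff_def using a by (simp add: of_nat_diff zmod_int)
  also have "\<dots> = (int (enc f s) - int (enc f' s')) mod (2*M)" using N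
    by (metis add_diff_eq diff_add_eq mod_add_self2)
  also have "\<dots> = ((s*(M+1) + f*M) - (s'*(M+1) + f'*M)) mod (2*M)"
    unfolding int_enc by (simp add: mod_diff_eq)
  also have "\<dots> = ((s-s')*(M+1) + (f-f')*M) mod (2*M)" by (simp add: algebra_simps)
  also have "\<dots> = int (enc (f-f') (s-s'))" by (simp add: int_enc)
  finally show ?thesis by simp
qed


lemma dvd_ex: "M dvd a \<Longrightarrow> \<exists>c. a = M*c" by (auto elim: dvdE)

definition phi :: "int \<Rightarrow> int" where
  "phi r = (if r mod M = 0 then 1 else (r mod M) mod 2)"

lemma phi_cong: "M dvd (a - b) \<Longrightarrow> phi a = phi b"
proof -
  assume "M dvd (a - b)"
  then have "a mod M = b mod M" using cg by blast
  then show ?thesis unfolding phi_def by simp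
qed

lemma phi0: "phi 0 = 1" unfolding phi_def by simp

lemma phi1: "phi 1 = 1" unfolding phi_def using M_ge by simp

lemma phi_mx: "phi (-x) = 0"
proof -
  have "x mod M = x" using x1 x_lt by simp
  then have "(-x) mod M = M - x" using x1 by (simp add: zmod_zminus1_eq_if)
  moreover have "even (M - x)" using M_odd xodd by simp
  moreover have "M - x \<noteq> 0" using x_lt by simp
  ultimately show ?thesis unfolding phi_def by simp
qed

lemma phi_zero: "M dvd a \<Longrightarrow> phi a = 1"
  using phi_cong[of a 0] phi0 by simp

lemma phi_succ:
  assumes "\<not> M dvd r"
  shows "(phi r + phi (r+1)) mod 2 = 1"
proof -
  define a where "a = r mod M"
  have a0: "a \<noteq> 0" using assms unfolding a_def by (simp add: dvd_eq_mod_eq_0)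
  have aM: "0 \<le> a" "a < M" unfolding a_def using M_ge by auto
  have r1: "(r+1) mod M = (a+1) mod M" unfolding a_def by (simp add: mod_add_left_eq)
  show ?thesis
  proof (cases "a + 1 = M")
    case True
    then have "(r+1) mod M = 0" using r1 by simp
    moreover have "a mod 2 = 0" using True M_odd by presburger
    ultimately show ?thesis unfolding phi_def a_def[symmetric] using a0 by simp
  next
    case False
    then have ra: "(r+1) mod M = a + 1" using r1 aM by simp
    have "a + 1 \<noteq> 0" using aM by simp
    then show ?thesis unfolding phi_def a_def[symmetric] ra using a0 by presburger
  qed
qed

lemma phi_01: "phi r = 0 \<or> phi r = 1"
  unfolding phi_def by auto

definition kap :: int where "kap = x - x^2"

definition val :: "nat \<Rightarrow> nat \<Rightarrow> int \<Rightarrow> nat" where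
  "val j e r = (if j = 0 then enc (int e) r
     else if j = 1 then (if e = 0 then enc (phi r) (x*r) else enc (1 - phi (r+1-x)) (x*r + kap))
     else (if e = 0 then enc (phi (r + x^2)) (x^2*r + kap) else enc (1 - phi (r+1)) (x^2*r)))"

lemma lin_mod: "(a*(r mod M) + b) mod M = (a*r + b) mod M"
proof -
  have "M dvd (r mod M - r)" using cg[of "r mod M" r] by simp
  then have "M dvd a*(r mod M - r)" by simp
  then show ?thesis using cg by (simp add: algebra_simps)
qed

lemma val_mod: "val j e (r mod M) = val j e r"
proof -
  have d: "M dvd (r mod M - r)" using cg[of "r mod M" r] by simp
  have P: "phi (r mod M + c) = phi (r + c)" for c
    by (rule phi_cong) (use d in simp)
  have P1: "phi (r mod M + 1 - x) = phi (r + 1 - x)" using P[of "1-x"] by (simp add: algebra_simps)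
  have P0: "phi (r mod M) = phi r" using P[of 0] by simp
  have E: "enc f (c*(r mod M) + b) = enc f (c*r+b)" for f c b by (rule enc_eq) (simp_all add: lin_mod)
  have E1: "enc f (r mod M) = enc f r" for f using E[of f 1 0] by simp
  have E2: "enc f (x*(r mod M)) = enc f (x*r)" for f using E[of f x 0] by simp
  have E3: "enc f (x^2*(r mod M)) = enc f (x^2*r)" for f using E[of f "x^2" 0] by simp
  show ?thesis unfolding val_def by (simp only: P P0 P1 E E1 E2 E3)
qed

end


context dca begin
lemma M_dvd_imp: "M dvd a \<Longrightarrow> a mod M = 0" by (simp add: dvd_eq_mod_eq_0)

lemma surjA:
  fixes V :: "nat \<Rightarrow> int \<Rightarrow> nat" and d :: nat
  assumes dN: "d < N"
  and h0: "V 0 ra = enc Ba La" and l0: "M dvd (La - int d)"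
  and h1: "V 1 rb = enc Bb Lb" and l1: "M dvd (Lb - int d)"
  and bits: "(Ba + Bb) mod 2 = 1"
  shows "\<exists>e<2. \<exists>r. V e r = d"
proof -
  have dd: "enc (int d mod 2) (int d) = d" using enc_self dN by simp
  have La: "La mod M = int d mod M" using l0 cg by blast
  have Lb: "Lb mod M = int d mod M" using l1 cg by blast
  show ?thesis
  proof (cases "Ba mod 2 = (int d mod 2) mod 2")
    case True
    have "enc Ba La = enc (int d mod 2) (int d)" by (rule enc_eq) (use True La in simp_all)
    then have "V 0 ra = d" using h0 dd by simp
    moreover have "(0::nat) < 2" by simp
    ultimately show ?thesis by blast
  next
    case False
    have a: "Ba mod 2 = 0 \<or> Ba mod 2 = 1" "Bb mod 2 = 0 \<or> Bb mod 2 = 1" "int d mod 2 = 0 \<or> int d mod 2 = 1" by auto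
    have "(Ba + Bb) mod 2 = (Ba mod 2 + Bb mod 2) mod 2" by (simp add: mod_add_eq)
    then have "Bb mod 2 = (int d mod 2) mod 2" using bits False a by auto
    then have "enc Bb Lb = enc (int d mod 2) (int d)" by (intro enc_eq) (use Lb in simp_all)
    then have "V 1 rb = d" using h1 dd by simp
    moreover have "(1::nat) < 2" by simp
    ultimately show ?thesis by blast
  qed
qed

lemma surjP:
  fixes V :: "nat \<Rightarrow> int \<Rightarrow> nat" and d :: nat
  assumes dN: "d < N" and dpos: "0 < d"
  and h0: "V 0 ra = enc Ba La" and l0: "M dvd (La - int d)"
  and h1: "V 1 rb = enc Bb Lb" and l1: "M dvd (Lb - int d)"
  and bits: "\<not> M dvd int d \<Longrightarrow> (Ba + Bb) mod 2 = 1"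
  and zero: "M dvd int d \<Longrightarrow> Ba mod 2 = 1"
  shows "\<exists>e<2. \<exists>r. V e r = d"
proof (cases "M dvd int d")
  case False
  then show ?thesis using surjA[OF dN h0 l0 h1 l1] bits by blast
next
  case True
  then obtain c where c: "int d = M*c" by (auto elim: dvdE)
  have "int d < 2*M" using dN M_ge unfolding N_def by simp
  then have "c = 1" using c dpos M_ge
  proof -
    have "M*c > 0" using c dpos by simp
    then have "c > 0" using M_ge by (simp add: zero_less_mult_iff)
    moreover have "M*c < M*2" using c \<open>int d < 2*M\<close> by (simp add: mult.commute)
    then have "c < 2" using M_ge by simp
    ultimately show ?thesis by simp
  qed
  then have dm: "int d = M" using c by simp
  have dd: "enc (int d mod 2) (int d) = d" using enc_self dN by simp
  have La: "La mod M = int d mod M" using l0 cg by blast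
  have "Ba mod 2 = (int d mod 2) mod 2" using zero True dm M_odd by (simp add: odd_iff_mod_2_eq_one)
  then have "enc Ba La = enc (int d mod 2) (int d)" by (intro enc_eq) (use La in simp_all)
  then have "V 0 ra = d" using h0 dd by simp
  moreover have "(0::nat) < 2" by simp
  ultimately show ?thesis by blast
qed

lemma nonzero:
  assumes "M dvd L \<Longrightarrow> B mod 2 = 1"
  shows "enc B L \<noteq> 0"
proof
  assume "enc B L = 0"
  then have "B mod 2 = 0" "L mod M = 0" using enc_zero by auto
  then show False using assms by (simp add: dvd_eq_mod_eq_0)
qed

lemma negodd: "(a + b) mod 2 = (1::int) \<Longrightarrow> (b - a) mod 2 = 1"
proof -
  assume "(a + b) mod 2 = 1"
  moreover have "b - a = (a + b) + 2*(-a)" by simp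
  ultimately show ?thesis by (metis mod_mult_self2)
qed


lemma Mdef: "M = x^2+x+1" by (simp add: M_def)

lemma cert: "B = (x^2+x+1)*c + (u*(1-x) - 1 - (x^2+x+1)*w)*s \<Longrightarrow> M dvd B"
  using hu0 unfolding M_def by simp

lemma cert2: "M dvd A \<Longrightarrow> B = A*k + (x^2+x+1)*c + (u*(1-x) - 1 - (x^2+x+1)*w)*s \<Longrightarrow> M dvd B"
proof -
  assume a: "M dvd A" and b: "B = A*k + (x^2+x+1)*c + (u*(1-x) - 1 - (x^2+x+1)*w)*s"
  have "B - A*k = (x^2+x+1)*c + (u*(1-x) - 1 - (x^2+x+1)*w)*s" using b by simp
  then have "M dvd B - A*k" by (rule cert)
  moreover have "M dvd A*k" using a by simp
  ultimately have "M dvd (B - A*k) + A*k" by (rule dvd_add)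
  then show ?thesis by simp
qed

lemma col_surj:
  assumes j: "j < 3" and dN: "d < N"
  shows "\<exists>e<2. \<exists>r. val j e r = d"
proof -
  define t where "t = int d"
  consider "j = 0" | "j = 1" | "j = 2" using j by linarith
  then show ?thesis
  proof cases
    case 1
    show ?thesis
      by (rule surjA[OF dN, where ra=t and rb=t and Ba=0 and Bb=1 and La=t and Lb=t])
         (simp_all add: 1 val_def t_def)
  next
    case 2
    have e: "x^2*t - 1 + x + 1 - x = x^2*t" by simp
    show ?thesis
    proof (rule surjA[OF dN, where ra="x^2*t" and rb="x^2*t - 1 + x"
          and Ba="phi (x^2*t)" and Bb="1 - phi (x^2*t)"
          and La="x*(x^2*t)" and Lb="x*(x^2*t - 1 + x) + kap"])
      show "val j 0 (x\<^sup>2 * t) = enc (phi (x\<^sup>2 * t)) (x * (x\<^sup>2 * t))" by (simp add: 2 val_def)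
      show "val j 1 (x\<^sup>2 * t - 1 + x) = enc (1 - phi (x\<^sup>2 * t)) (x * (x\<^sup>2 * t - 1 + x) + kap)"
        by (simp only: 2 val_def e) simp
      show "M dvd x * (x\<^sup>2 * t) - int d" unfolding t_def[symmetric]
        by (rule cert[where c="((-1)*t + x*t)" and s=0]) algebra
      show "M dvd x * (x\<^sup>2 * t - 1 + x) + kap - int d" unfolding t_def[symmetric] kap_def
        by (rule cert[where c="((-1)*t + x*t)" and s=0]) algebra
      show "(phi (x\<^sup>2 * t) + (1 - phi (x\<^sup>2 * t))) mod 2 = 1" by simp
    qed
  next
    case 3
    have e: "x*t - x^2 + 1 + x^2 = x*t + 1" by simp
    show ?thesis
    proof (rule surjA[OF dN, where ra="x*t - x^2 + 1" and rb="x*t"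
          and Ba="phi (x*t + 1)" and Bb="1 - phi (x*t + 1)"
          and La="x^2*(x*t - x^2 + 1) + kap" and Lb="x^2*(x*t)"])
      show "val j 0 (x*t - x^2 + 1) = enc (phi (x*t + 1)) (x^2*(x*t - x^2 + 1) + kap)"
        by (simp only: 3 val_def e) simp
      show "val j 1 (x*t) = enc (1 - phi (x*t + 1)) (x^2*(x*t))"
        by (simp add: 3 val_def add.commute)
      show "M dvd x^2*(x*t - x^2 + 1) + kap - int d" unfolding t_def[symmetric] kap_def
        by (rule cert[where c="((-1)*t + x + x*t + (-1)*x^2)" and s=0]) algebra
      show "M dvd x^2*(x*t) - int d" unfolding t_def[symmetric]
        by (rule cert[where c="((-1)*t + x*t)" and s=0]) algebra
      show "(phi (x*t + 1) + (1 - phi (x*t + 1))) mod 2 = 1" by simp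
    qed
  qed
qed


definition D :: "nat \<Rightarrow> nat \<Rightarrow> nat \<Rightarrow> int \<Rightarrow> nat" where
  "D j j' e r = zdiff N (val j e r) (val j' e r)"

lemma D01: "D 0 1 0 r = enc (0 - phi r) (r - x*r)"
  "D 0 1 1 r = enc (1 - (1 - phi (r+1-x))) (r - (x*r+kap))"
  by (simp_all add: D_def val_def zdiff_enc)

lemma D02: "D 0 2 0 r = enc (0 - phi (r + x^2)) (r - (x^2*r + kap))"
  "D 0 2 1 r = enc (1 - (1 - phi (r+1))) (r - x^2*r)"
  by (simp_all add: D_def val_def zdiff_enc)

lemma D12: "D 1 2 0 r = enc (phi r - phi (r + x^2)) (x*r - (x^2*r + kap))"
  "D 1 2 1 r = enc ((1 - phi (r+1-x)) - (1 - phi (r+1))) ((x*r+kap) - x^2*r)"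
  by (simp_all add: D_def val_def zdiff_enc)

lemma pair01_surj:
  assumes dN: "d < N" and dpos: "0 < d"
  shows "\<exists>e<2. \<exists>r. D 0 1 e r = d"
proof -
  define t where "t = int d"
  have nt: "M dvd u*t \<Longrightarrow> M dvd t"
    by (erule cert2[where k="1-x" and c="((-1)*w*t)" and s="((-1)*t)"]) algebra
  have e1: "u*t + x + 1 - x = u*t + 1" by simp
  show ?thesis
  proof (rule surjP[OF dN dpos, where V="D 0 1" and ra="u*t" and rb="u*t+x"
        and Ba="0 - phi (u*t)" and Bb="1 - (1 - phi (u*t + x + 1 - x))"
        and La="u*t - x*(u*t)" and Lb="(u*t + x) - (x*(u*t + x) + kap)"])
    show "D 0 1 0 (u * t) = enc (0 - phi (u * t)) (u * t - x * (u * t))" by (rule D01)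
    show "D 0 1 1 (u * t + x) = enc (1 - (1 - phi (u * t + x + 1 - x))) (u * t + x - (x * (u * t + x) + kap))"
      by (rule D01)
    show "M dvd u * t - x * (u * t) - int d" unfolding t_def[symmetric]
      by (rule cert[where c="(w*t)" and s="t"]) algebra
    show "M dvd u * t + x - (x * (u * t + x) + kap) - int d" unfolding t_def[symmetric] kap_def
      by (rule cert[where c="(w*t)" and s="t"]) algebra
    show "(0 - phi (u * t) + (1 - (1 - phi (u * t + x + 1 - x)))) mod 2 = 1" if "\<not> M dvd int d"
    proof -
      have "\<not> M dvd u*t" using nt that t_def by blast
      then have "(phi (u*t) + phi (u*t+1)) mod 2 = 1" by (rule phi_succ)
      then have "(phi (u*t+1) - phi (u*t)) mod 2 = 1" by (rule negodd)
      then show ?thesis unfolding e1 by simp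
    qed
    show "(0 - phi (u * t)) mod 2 = 1" if "M dvd int d"
    proof -
      have "M dvd u*t" using that t_def by simp
      then have "phi (u*t) = 1" by (rule phi_zero)
      then show ?thesis by simp
    qed
  qed
qed

lemma pair01_nz: "e < 2 \<Longrightarrow> D 0 1 e r \<noteq> 0"
proof -
  assume "e < 2"
  then consider "e = 0" | "e = 1" by linarith
  then show ?thesis
  proof cases
    case 1
    show ?thesis unfolding 1 D01
    proof (rule nonzero)
      assume "M dvd r - x*r"
      then have "M dvd r" by (rule cert2[where k="u" and c="((-1)*w*r)" and s="((-1)*r)"]) algebra
      then have "phi r = 1" by (rule phi_zero)
      then show "(0 - phi r) mod 2 = 1" by simp
    qed
  next
    case 2
    show ?thesis unfolding 2 D01
    proof (rule nonzero)
      assume "M dvd r - (x*r + kap)"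
      then have "M dvd r + 1 - x - 1" unfolding kap_def
        by (rule cert2[where k="u" and c="((-1)*w*r + x*w)" and s="((-1)*r + x)"]) algebra
      then have "phi (r + 1 - x) = phi 1" by (rule phi_cong)
      then show "(1 - (1 - phi (r + 1 - x))) mod 2 = 1" using phi1 by simp
    qed
  qed
qed


lemma mod2_add2: "(a + 2*b) mod 2 = (a::int) mod 2" by presburger

lemma pair02_surj:
  assumes dN: "d < N" and dpos: "0 < d"
  shows "\<exists>e<2. \<exists>r. D 0 2 e r = d"
proof -
  define t where "t = int d"
  define v where "v = -x*u*t"
  have nt: "M dvd v \<Longrightarrow> M dvd t" unfolding v_def
    by (erule cert2[where k="1-x^2" and c="(t + x*w*t + x^2*w*t)" and s="(x*t + x^2*t)"]) algebra
  have e1: "v - x^2 + x^2 = v" by simp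
  show ?thesis
  proof (rule surjP[OF dN dpos, where V="D 0 2" and ra="v - x^2" and rb="v"
        and Ba="0 - phi (v - x^2 + x^2)" and Bb="1 - (1 - phi (v + 1))"
        and La="v - x^2 - (x^2*(v - x^2) + kap)" and Lb="v - x^2*v"])
    show "D 0 2 0 (v - x^2) = enc (0 - phi (v - x^2 + x^2)) (v - x^2 - (x^2*(v - x^2) + kap))" by (rule D02)
    show "D 0 2 1 v = enc (1 - (1 - phi (v + 1))) (v - x^2*v)" by (rule D02)
    show "M dvd v - x^2 - (x^2*(v - x^2) + kap) - int d" unfolding t_def[symmetric] kap_def v_def
      by (rule cert[where c="((-1)*t + (-1)*x + (-1)*x*w*t + x^2 + (-1)*x^2*w*t)" and s="((-1)*x*t + (-1)*x^2*t)"]) algebra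
    show "M dvd v - x^2*v - int d" unfolding t_def[symmetric] v_def
      by (rule cert[where c="((-1)*t + (-1)*x*w*t + (-1)*x^2*w*t)" and s="((-1)*x*t + (-1)*x^2*t)"]) algebra
    show "(0 - phi (v - x^2 + x^2) + (1 - (1 - phi (v + 1)))) mod 2 = 1" if "\<not> M dvd int d"
    proof -
      have "\<not> M dvd v" using nt that t_def by blast
      then have "(phi v + phi (v+1)) mod 2 = 1" by (rule phi_succ)
      then have "(phi (v+1) - phi v) mod 2 = 1" by (rule negodd)
      then show ?thesis unfolding e1 by simp
    qed
    show "(0 - phi (v - x^2 + x^2)) mod 2 = 1" if "M dvd int d"
    proof -
      have "M dvd v" using that unfolding t_def v_def by simp
      then have "phi v = 1" by (rule phi_zero)
      then show ?thesis unfolding e1 by simp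
    qed
  qed
qed

lemma pair02_nz: "e < 2 \<Longrightarrow> D 0 2 e r \<noteq> 0"
proof -
  assume "e < 2"
  then consider "e = 0" | "e = 1" by linarith
  then show ?thesis
  proof cases
    case 1
    show ?thesis unfolding 1 D02
    proof (rule nonzero)
      assume "M dvd r - (x^2*r + kap)"
      then have "M dvd r + x^2" unfolding kap_def
        by (rule cert2[where k="-x*u" and c="(r + x*w*r + (-1)*x^2*w + x^2*w*r)" and s="(x*r + (-1)*x^2 + x^2*r)"]) algebra
      then have "phi (r + x^2) = 1" by (rule phi_zero)
      then show "(0 - phi (r + x^2)) mod 2 = 1" by simp
    qed
  next
    case 2
    show ?thesis unfolding 2 D02
    proof (rule nonzero)
      assume "M dvd r - x^2*r"
      then have "M dvd r" by (rule cert2[where k="-x*u" and c="(r + x*w*r + x^2*w*r)" and s="(x*r + x^2*r)"]) algebra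
      then have "M dvd r + 1 - 1" by simp
      then have "phi (r + 1) = phi 1" by (rule phi_cong)
      then show "(1 - (1 - phi (r + 1))) mod 2 = 1" using phi1 by simp
    qed
  qed
qed

lemma pair12_surj:
  assumes dN: "d < N" and dpos: "0 < d"
  shows "\<exists>e<2. \<exists>r. D 1 2 e r = d"
proof -
  define t where "t = int d"
  define W where "W = x^2*u*t"
  have nt: "M dvd W \<Longrightarrow> M dvd t" unfolding W_def
    by (erule cert2[where k="x - x^2" and c="(t + (-1)*x*t + (-1)*x^3*w*t)" and s="((-1)*x^3*t)"]) algebra
  have pe: "phi (W + 1 + x^2) = phi (W - x)"
    by (rule phi_cong, rule cert[where c=1 and s=0]) algebra
  have e2: "W - 1 + 1 - x = W - x" by simp
  have e3: "W - 1 + 1 = W" by simp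
  show ?thesis
  proof (rule surjP[OF dN dpos, where V="D 1 2" and ra="W + 1" and rb="W - 1"
        and Ba="phi (W+1) - phi (W + 1 + x^2)" and Bb="(1 - phi (W - 1 + 1 - x)) - (1 - phi (W - 1 + 1))"
        and La="x*(W+1) - (x^2*(W+1) + kap)" and Lb="(x*(W-1)+kap) - x^2*(W-1)"])
    show "D 1 2 0 (W + 1) = enc (phi (W+1) - phi (W + 1 + x^2)) (x*(W+1) - (x^2*(W+1) + kap))" by (rule D12)
    show "D 1 2 1 (W - 1) = enc ((1 - phi (W - 1 + 1 - x)) - (1 - phi (W - 1 + 1))) ((x*(W-1)+kap) - x^2*(W-1))" by (rule D12)
    show "M dvd x*(W+1) - (x^2*(W+1) + kap) - int d" unfolding t_def[symmetric] kap_def W_def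
      by (rule cert[where c="((-1)*t + x*t + x^3*w*t)" and s="(x^3*t)"]) algebra
    show "M dvd (x*(W-1)+kap) - x^2*(W-1) - int d" unfolding t_def[symmetric] kap_def W_def
      by (rule cert[where c="((-1)*t + x*t + x^3*w*t)" and s="(x^3*t)"]) algebra
    show "(phi (W+1) - phi (W + 1 + x^2) + ((1 - phi (W - 1 + 1 - x)) - (1 - phi (W - 1 + 1)))) mod 2 = 1" if "\<not> M dvd int d"
    proof -
      have "\<not> M dvd W" using nt that t_def by blast
      then have h: "(phi W + phi (W+1)) mod 2 = 1" by (rule phi_succ)
      have "phi (W+1) - phi (W + 1 + x^2) + ((1 - phi (W - 1 + 1 - x)) - (1 - phi (W - 1 + 1)))
          = (phi W + phi (W+1)) + 2*(- phi (W - x))" (is "?L = _") unfolding pe e2 e3 by simp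
      then have "?L mod 2 = (phi W + phi (W+1)) mod 2" by (simp only: mod2_add2)
      then show ?thesis using h by simp
    qed
    show "(phi (W+1) - phi (W + 1 + x^2)) mod 2 = 1" if "M dvd int d"
    proof -
      have w: "M dvd W" using that unfolding t_def W_def by simp
      then have "M dvd W + 1 - 1" by simp
      then have "phi (W+1) = phi 1" by (rule phi_cong)
      moreover have "M dvd W + 1 + x^2 - (-x)" using w
        by (rule cert2[where k=1 and c=1 and s=0]) algebra
      then have "phi (W + 1 + x^2) = phi (-x)" by (rule phi_cong)
      ultimately show ?thesis using phi1 phi_mx by simp
    qed
  qed
qed

lemma pair12_nz: "e < 2 \<Longrightarrow> D 1 2 e r \<noteq> 0"
proof -
  assume "e < 2"
  then consider "e = 0" | "e = 1" by linarith
  then show ?thesis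
  proof cases
    case 1
    show ?thesis unfolding 1 D12
    proof (rule nonzero)
      assume "M dvd x*r - (x^2*r + kap)"
      then have a: "M dvd r - 1" unfolding kap_def
        by (rule cert2[where k="x^2*u" and c="((-1) + r + x + (-1)*x*r + x^3*w + (-1)*x^3*w*r)" and s="(x^3 + (-1)*x^3*r)"]) algebra
      then have "phi r = phi 1" by (rule phi_cong)
      moreover have "M dvd r + x^2 - (-x)" using a
        by (rule cert2[where k=1 and c=1 and s=0]) algebra
      then have "phi (r + x^2) = phi (-x)" by (rule phi_cong)
      ultimately show "(phi r - phi (r + x^2)) mod 2 = 1" using phi1 phi_mx by simp
    qed
  next
    case 2
    show ?thesis unfolding 2 D12
    proof (rule nonzero)
      assume "M dvd (x*r + kap) - x^2*r"
      then have a: "M dvd r + 1" unfolding kap_def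
        by (rule cert2[where k="x^2*u" and c="((1) + r + (-1)*x + (-1)*x*r + (-1)*x^3*w + (-1)*x^3*w*r)" and s="((-1)*x^3 + (-1)*x^3*r)"]) algebra
      then have "phi (r + 1) = 1" by (rule phi_zero)
      moreover have "M dvd r + 1 - x - (-x)" using a
        by (rule cert2[where k=1 and c=0 and s=0]) algebra
      then have "phi (r + 1 - x) = phi (-x)" by (rule phi_cong)
      ultimately show "(1 - phi (r + 1 - x) - (1 - phi (r + 1))) mod 2 = 1" using phi_mx by simp
    qed
  qed
qed


end


context dca begin
lemma N_pos: "0 < N" unfolding N_def using M_ge by simp

lemma zsw:
  assumes ab: "a < n" "b < n"
  shows "zdiff n b a = (n - zdiff n a b) mod n"
proof (cases "a < b")
  case True
  have e1: "a + n - b < n" using True ab by linarith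
  have 1: "zdiff n a b = a + n - b" unfolding zdiff_def using e1 by (rule mod_less)
  have e: "b + n - a = (b - a) + n" using True by linarith
  have "zdiff n b a = ((b - a) + n) mod n" unfolding zdiff_def e by (rule refl)
  also have "\<dots> = (b - a) mod n" by (rule mod_add_self2)
  also have "\<dots> = b - a" using ab by (intro mod_less) linarith
  finally have 2: "zdiff n b a = b - a" .
  have e3: "n - (a + n - b) = b - a" using True ab by linarith
  have "(n - zdiff n a b) mod n = b - a" unfolding 1 e3 using ab by (intro mod_less) linarith
  then show ?thesis using 2 by simp
next
  case False
  have e: "a + n - b = (a - b) + n" using False by linarith
  have "zdiff n a b = ((a - b) + n) mod n" unfolding zdiff_def e by (rule refl)
  also have "\<dots> = (a - b) mod n" by (rule mod_add_self2)
  also have "\<dots> = a - b" using ab by (intro mod_less) linarith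
  finally have 1: "zdiff n a b = a - b" .
  show ?thesis
  proof (cases "a = b")
    case True
    have "zdiff n b a = n mod n" unfolding zdiff_def True by simp
    then show ?thesis unfolding 1 True by simp
  next
    case F: False
    have lt: "b + n - a < n" using F False ab by linarith
    have "zdiff n b a = b + n - a" unfolding zdiff_def using lt by (rule mod_less)
    moreover have "n - (a - b) = b + n - a" using F False ab by linarith
    ultimately show ?thesis unfolding 1 using lt by simp
  qed
qed

lemma pair_nz:
  assumes "j < 3" "j' < 3" "j \<noteq> j'" "e < 2"
  shows "zdiff N (val j e r) (val j' e r) \<noteq> 0"
proof -
  have s: "zdiff N (val j' e r) (val j e r) \<noteq> 0 \<Longrightarrow> zdiff N (val j e r) (val j' e r) \<noteq> 0"
  proof -
    assume h: "zdiff N (val j' e r) (val j e r) \<noteq> 0"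
    have lt: "zdiff N (val j' e r) (val j e r) < N" unfolding zdiff_def using N_pos by simp
    have "zdiff N (val j e r) (val j' e r) = (N - zdiff N (val j' e r) (val j e r)) mod N"
      by (rule zsw) (simp_all add: enc_lt val_def)
    also have "\<dots> = N - zdiff N (val j' e r) (val j e r)" using h lt by simp
    finally show ?thesis using h lt by simp
  qed
  have "(j = 0 \<and> j' = 1) \<or> (j = 0 \<and> j' = 2) \<or> (j = 1 \<and> j' = 2) \<or> (j = 1 \<and> j' = 0) \<or> (j = 2 \<and> j' = 0) \<or> (j = 2 \<and> j' = 1)"
    using assms by auto
  then show ?thesis
    using pair01_nz[OF assms(4)] pair02_nz[OF assms(4)] pair12_nz[OF assms(4)] s unfolding D_def by auto
qed

lemma pair_surj:
  assumes jj: "j < 3" "j' < 3" "j \<noteq> j'" and dd: "0 < d" "d < N"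
  shows "\<exists>e<2. \<exists>r. zdiff N (val j e r) (val j' e r) = d"
proof -
  have direct: "\<exists>e<2. \<exists>r. zdiff N (val a e r) (val b e r) = dd"
    if ab: "(a = 0 \<and> b = 1) \<or> (a = 0 \<and> b = 2) \<or> (a = 1 \<and> b = 2)" and d1: "0 < dd" and d2: "dd < N" for a b dd
    using ab
  proof (elim disjE conjE)
    assume "a = 0" "b = 1" then show ?thesis using pair01_surj[OF d2 d1] unfolding D_def by simp
  next
    assume "a = 0" "b = 2" then show ?thesis using pair02_surj[OF d2 d1] unfolding D_def by simp
  next
    assume "a = 1" "b = 2" then show ?thesis using pair12_surj[OF d2 d1] unfolding D_def by simp
  qed
  have swapped: "\<exists>e<2. \<exists>r. zdiff N (val b e r) (val a e r) = d"
    if ab: "(a = 0 \<and> b = 1) \<or> (a = 0 \<and> b = 2) \<or> (a = 1 \<and> b = 2)" for a b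
  proof -
    have n1: "0 < N - d" and n2: "N - d < N" using dd by auto
    obtain e r where er: "e < 2" "zdiff N (val a e r) (val b e r) = N - d"
      using direct[OF ab n1 n2] by blast
    have "zdiff N (val b e r) (val a e r) = (N - zdiff N (val a e r) (val b e r)) mod N"
      by (rule zsw) (simp_all add: enc_lt val_def)
    also have "\<dots> = d" using er dd by simp
    finally show ?thesis using er(1) by blast
  qed
  have "(j = 0 \<and> j' = 1) \<or> (j = 0 \<and> j' = 2) \<or> (j = 1 \<and> j' = 2) \<or> (j = 1 \<and> j' = 0) \<or> (j = 2 \<and> j' = 0) \<or> (j = 2 \<and> j' = 1)"
    using jj by auto
  then show ?thesis
  proof (elim disjE conjE)
    assume "j = 0" "j' = 1" then show ?thesis using direct[OF _ dd] by simp
  next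
    assume "j = 0" "j' = 2" then show ?thesis using direct[OF _ dd] by simp
  next
    assume "j = 1" "j' = 2" then show ?thesis using direct[OF _ dd] by simp
  next
    assume "j = 1" "j' = 0" then show ?thesis using swapped[of 0 1] by simp
  next
    assume "j = 2" "j' = 0" then show ?thesis using swapped[of 0 2] by simp
  next
    assume "j = 2" "j' = 1" then show ?thesis using swapped[of 1 2] by simp
  qed
qed

definition Qf :: "nat \<Rightarrow> nat \<Rightarrow> nat" where
  "Qf R j = (if R < N \<and> j < 3 then val j (R div nat M) (int (R mod nat M)) else 0)"

lemma N2: "N = 2 * nat M" unfolding N_def using M_ge by simp

lemma row_ex:
  assumes "e < 2"
  shows "\<exists>R<N. \<forall>j<3. Qf R j = val j e r"
proof -
  define m' where "m' = nat M"
  have mp: "0 < m'" unfolding m'_def using M_ge by simp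
  define a where "a = nat (r mod M)"
  have a: "a < m'" "int a = r mod M" unfolding a_def m'_def using M_ge by auto
  define R where "R = e*m' + a"
  have Rd: "R div m' = e" "R mod m' = a" unfolding R_def using a mp by auto
  have "e*m' \<le> 1*m'" using assms by (intro mult_right_mono) auto
  then have "e*m' + a < 2*m'" using a(1) by linarith
  then have "R < N" unfolding R_def N2 m'_def by simp
  moreover have "\<forall>j<3. Qf R j = val j e r"
    using \<open>R < N\<close> Rd a unfolding Qf_def m'_def[symmetric] by (simp add: val_mod)
  ultimately show ?thesis by blast
qed

lemma Qf_lt: "Qf R j < N" unfolding Qf_def using N_pos by (simp add: val_def enc_lt)

lemma Qf_val: "R < N \<Longrightarrow> j < 3 \<Longrightarrow> Qf R j = val j (R div nat M) (int (R mod nat M)) \<and> R div nat M < 2"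
  unfolding Qf_def using N2 by (simp add: less_mult_imp_div_less)

lemma col_row: "j < 3 \<Longrightarrow> d < N \<Longrightarrow> \<exists>R<N. Qf R j = d"
proof -
  assume a: "j < 3" "d < N"
  obtain e r where er: "e < 2" "val j e r = d" using col_surj[OF a] by blast
  obtain R where "R < N" "\<forall>j<3. Qf R j = val j e r" using row_ex[OF er(1)] by blast
  then show ?thesis using er a by auto
qed

lemma pair_row: "j < 3 \<Longrightarrow> j' < 3 \<Longrightarrow> j \<noteq> j' \<Longrightarrow> 0 < d \<Longrightarrow> d < N \<Longrightarrow> \<exists>R<N. zdiff N (Qf R j) (Qf R j') = d"
proof -
  assume a: "j < 3" "j' < 3" "j \<noteq> j'" "0 < d" "d < N"
  obtain e r where er: "e < 2" "zdiff N (val j e r) (val j' e r) = d" using pair_surj[OF a] by blast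
  obtain R where "R < N" "\<forall>j<3. Qf R j = val j e r" using row_ex[OF er(1)] by blast
  then show ?thesis using er a by metis
qed

lemma pair_row_nz: "j < 3 \<Longrightarrow> j' < 3 \<Longrightarrow> j \<noteq> j' \<Longrightarrow> R < N \<Longrightarrow> zdiff N (Qf R j) (Qf R j') \<noteq> 0"
proof -
  assume a: "j < 3" "j' < 3" "j \<noteq> j'" "R < N"
  have "Qf R j = val j (R div nat M) (int (R mod nat M))" "R div nat M < 2"
    "Qf R j' = val j' (R div nat M) (int (R mod nat M))" using Qf_val a by auto
  then show ?thesis using pair_nz a by simp
qed

theorem main_loc: "normalized_DCA 4 N Qf \<and> DCA_P1 4 (N + 1) Qf \<and> DCA_P2 4 N Qf"
proof (intro conjI)
  have Qz: "Qf R 3 = 0" "Qf N j = 0" for R j unfolding Qf_def by auto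
  have cov: "\<exists>i<N+1. zdiff N (Qf i j) (Qf i j') = d" if hyp: "j < 4" "j' < 4" "j \<noteq> j'" "d < N" for j j' d
  proof -
    have "j = 3 \<or> j' = 3 \<or> (j < 3 \<and> j' < 3)" using hyp(1,2) by auto
    then consider "j = 3" | "j' = 3" | "j < 3" "j' < 3" by blast
    then show ?thesis
    proof cases
      case 1
      then have j': "j' < 3" using hyp by simp
      have "(N - d) mod N < N" using N_pos by simp
      then obtain R where R: "R < N" "Qf R j' = (N - d) mod N" using col_row[OF j'] by blast
      have "zdiff N (Qf R j) (Qf R j') = d"
        unfolding 1 Qz R(2) zdiff_def using hyp(4)
        by (cases "d = 0") auto
      then show ?thesis using R(1) by (intro exI[of _ R]) simp
    next
      case 2
      then have j: "j < 3" using hyp by simp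
      obtain R where R: "R < N" "Qf R j = d" using col_row[OF j hyp(4)] by blast
      have "zdiff N (Qf R j) (Qf R j') = d" unfolding 2 Qz R(2) zdiff_def using hyp(4) by simp
      then show ?thesis using R(1) by (intro exI[of _ R]) simp
    next
      case 3
      show ?thesis
      proof (cases "d = 0")
        case True
        have "zdiff N (Qf N j) (Qf N j') = d" unfolding Qz zdiff_def True by simp
        then show ?thesis by (intro exI[of _ N]) simp
      next
        case False
        then obtain R where "R < N" "zdiff N (Qf R j) (Qf R j') = d"
          using pair_row[OF 3 hyp(3) _ hyp(4)] by blast
        then show ?thesis by (intro exI[of _ R]) simp
      qed
    qed
  qed
  show "normalized_DCA 4 N Qf"
    unfolding normalized_DCA_def is_DCA_def using Qz Qf_lt cov by auto
  show "DCA_P1 4 (N + 1) Qf"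
    unfolding DCA_P1_def
  proof (intro allI impI)
    fix j :: nat assume j: "j < 4"
    obtain R where R: "R < N" "Qf R j = 0"
    proof (cases "j = 3")
      case True then show ?thesis using that[of 0] N_pos Qz by simp
    next
      case False then have "j < 3" using j by simp
      then show ?thesis using that col_row N_pos by blast
    qed
    have "{R, N} \<subseteq> {i. i < N + 1 \<and> Qf i j = 0}" using R Qz by auto
    moreover have "finite {i. i < N + 1 \<and> Qf i j = 0}" by simp
    ultimately have "card {R, N} \<le> card {i. i < N + 1 \<and> Qf i j = 0}" by (rule card_mono[rotated])
    moreover have "card {R, N} = 2" using R by simp
    ultimately show "2 \<le> card {i. i < N + 1 \<and> Qf i j = 0}" by simp
  qed
  show "DCA_P2 4 N Qf"
    unfolding DCA_P2_def
  proof (intro allI impI)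
    fix j j' :: nat assume a: "j < 4" "j' < 4" "j \<noteq> j' \<and> j \<noteq> 4 - 1 \<and> j' \<noteq> 4 - 1"
    then have jj: "j < 3" "j' < 3" "j \<noteq> j'" by auto
    show "{zdiff N (Qf i j) (Qf i j') |i. i < N} = {1..<N}"
    proof
      show "{zdiff N (Qf i j) (Qf i j') |i. i < N} \<subseteq> {1..<N}"
      proof
        fix z assume "z \<in> {zdiff N (Qf i j) (Qf i j') |i. i < N}"
        then obtain i where i: "i < N" "z = zdiff N (Qf i j) (Qf i j')" by blast
        have "z \<noteq> 0" using pair_row_nz[OF jj i(1)] i by simp
        moreover have "z < N" unfolding i(2) zdiff_def using N_pos by simp
        ultimately show "z \<in> {1..<N}" by simp
      qed
      show "{1..<N} \<subseteq> {zdiff N (Qf i j) (Qf i j') |i. i < N}"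
      proof
        fix z assume "z \<in> {1..<N}"
        then have "0 < z" "z < N" by auto
        then obtain R where "R < N" "zdiff N (Qf R j) (Qf R j') = z" using pair_row[OF jj] by blast
        then show "z \<in> {zdiff N (Qf i j) (Qf i j') |i. i < N}" by blast
      qed
    qed
  qed
qed

end



theorem mainTheorem19:
  fixes i k m :: nat
  assumes "i mod 3 \<noteq> 2"
    and "k = 2 * i ^ 2 + 7 * i + 6"
    and "m = 2 * k + 1"
  shows "\<exists>Q. normalized_DCA 4 (2 * m) Q \<and> DCA_P1 4 (2 * m + 1) Q \<and> DCA_P2 4 (2 * m) Q"
proof -
  have "i mod 3 = 0 \<or> i mod 3 = 1" using assms(1) by linarith
  then obtain a where ia: "i = 3*a \<or> i = 3*a + 1" by (metis div_mod_decomp mult.commute add_0_right)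
  have "3 dvd k"
    using ia
  proof
    assume "i = 3*a"
    then have "k = 3*(6*a^2 + 7*a + 2)" using assms(2) by (simp add: power2_eq_square algebra_simps)
    then show ?thesis by simp
  next
    assume "i = 3*a + 1"
    then have "k = 3*(6*a^2 + 11*a + 5)" using assms(2) by (simp add: power2_eq_square algebra_simps)
    then show ?thesis by simp
  qed
  then obtain c where c: "k = 3*c" by (auto elim: dvdE)
  define x :: int where "x = 2 * int i + 3"
  define q :: int where "q = 2 * int c"
  have q3: "3*q = x^2 + x"
  proof -
    have "int k = 2 * (int i)^2 + 7 * int i + 6" using assms(2) by simp
    then show ?thesis unfolding q_def x_def using c by (simp add: power2_eq_square algebra_simps)
  qed
  define u where "u = (1-x)*x^2*q"
  define w where "w = x^2*q - x^3 + x - 1"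
  have id: "u*(1-x) - 1 - (x^2+x+1)*w = (-1)*x^3*(3*q - (x^2+x))"
    unfolding u_def w_def by algebra
  have hu: "u*(1-x) - 1 = (x^2+x+1)*w" using id q3 by simp
  have x1: "x \<ge> 1" unfolding x_def by simp
  have xo: "odd x" unfolding x_def by simp
  interpret dca x u w using x1 xo hu by unfold_locales
  have Mm: "M = int m"
  proof -
    have "int m = 2 * int k + 1" using assms(3) by simp
    moreover have "int k = 2 * (int i)^2 + 7 * int i + 6" using assms(2) by simp
    moreover have "M = x^2+x+1" by (rule Mdef)
    ultimately show ?thesis unfolding x_def by (simp add: power2_eq_square algebra_simps)
  qed
  have "N = 2*m" unfolding N_def Mm by simp
  then show ?thesis using main_loc by auto
qed


end
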